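(* Let $X=(X_k\xrightarrow{v^k}\cdots\xrightarrow{v^1}\langle1\rangle)$ and $Y=(Y_k\xrightarrow{u^k}\cdots\xrightarrow{u^1}\langle1\rangle)$ be $k$-stage level trees with crossings and let $\sigma=(\sigma_i\colon X_i\to Y_i)_{i}$ be an unordered isomorphism from $X$ to $Y$. Then the family $\overline{\sigma}$ (the same bijections $\sigma_i$, regarded as maps $\overline{X}_i\to\overline{Y}_i$) is an isomorphism of $k$-stage level trees $\overline{X}\to\overline{Y}$, i.e. every $\sigma_i\colon\overline{X}_i\to\overline{Y}_i$ is order preserving, if and only if each $\sigma_i$ is order preserving on the fibres of $v^i$, i.e. for all $a,b\in X_i$ with $v^i(a)=v^i(b)$ and $a<b$ in $X_i$ we have $\sigma_i(a)<\sigma_i(b)$ in $Y_i$.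
   Context: Write $\langle\ell\rangle=\{1<\dots<\ell\}$. A $k$-stage level tree with crossings is a diagram $X_k\xrightarrow{v^k}\cdots\xrightarrow{v^2}X_1\xrightarrow{v^1}\langle1\rangle$ of finite totally ordered sets and arbitrary (not necessarily order preserving) functions; it is a $k$-stage level tree if all maps are order preserving. An unordered isomorphism $X\to Y$ of $k$-stage level trees (with crossings) is a family of bijections $\sigma_i\colon X_i\to Y_i$ of underlying sets commuting with the structure maps ($u^i\sigma_i=\sigma_{i-1}v^i$, $\sigma_0=\mathrm{id}$); an isomorphism of $k$-stage level trees is an unordered isomorphism whose components are order preserving. For a $k$-stage level tree with crossings $X$, $\overline{X}$ is the diagram with the same underlying sets and maps and new orders defined inductively: $\overline{X}_1=X_1$, and $\overline{X}_{i+1}$ carries the unique total order making $v^{i+1}\times\mathrm{id}\colon\overline{X}_{i+1}\to\overline{X}_i\times X_{i+1}$ order preserving, where $\overline{X}_i\times X_{i+1}$ has the lexicographic order ($(a,b)\le(a',b')$ iff $a<a'$, or $a=a'$ and $b\le b'$). Then $\overline{X}$ is a $k$-stage level tree. *)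

theory Defs
  imports Main
begin

text \<open>Each finite totally ordered set X_i is
  represented (up to order isomorphism) by the standard ordinal {..<n i} with the
  usual order on nat; X_0 = <1> = {0}. The structure maps v i : X_i -> X_(i-1)
  (1 <= i <= k) are arbitrary functions.\<close>

definition level_tree_crossings :: "nat \<Rightarrow> (nat \<Rightarrow> nat) \<Rightarrow> (nat \<Rightarrow> nat \<Rightarrow> nat) \<Rightarrow> bool" where
  "level_tree_crossings k n v \<longleftrightarrow>
     n 0 = 1 \<and> (\<forall>i\<in>{1..k}. \<forall>a<n i. v i a < n (i - 1))"

definition unordered_iso ::
  "nat \<Rightarrow> (nat \<Rightarrow> nat) \<Rightarrow> (nat \<Rightarrow> nat \<Rightarrow> nat) \<Rightarrow> (nat \<Rightarrow> nat) \<Rightarrow> (nat \<Rightarrow> nat \<Rightarrow> nat)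
     \<Rightarrow> (nat \<Rightarrow> nat \<Rightarrow> nat) \<Rightarrow> bool" where
  "unordered_iso k n v m u \<sigma> \<longleftrightarrow>
     (\<forall>a<n 0. \<sigma> 0 a = a) \<and>
     (\<forall>i\<in>{1..k}. bij_betw (\<sigma> i) {..<n i} {..<m i}) \<and>
     (\<forall>i\<in>{1..k}. \<forall>a<n i. u i (\<sigma> i a) = \<sigma> (i - 1) (v i a))"

text \<open>The strict order of the level-tree X-bar: bar_X_1 = X_1 and bar_X_(i+1) is
  the pullback of the lexicographic order on bar_X_i x X_(i+1) along v^(i+1) x id.
  (Starting at level 0 = <1> gives exactly bar_X_1 = X_1.)\<close>

fun bar_less :: "(nat \<Rightarrow> nat \<Rightarrow> nat) \<Rightarrow> nat \<Rightarrow> nat \<Rightarrow> nat \<Rightarrow> bool" where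
  "bar_less v 0 a b \<longleftrightarrow> a < b"
| "bar_less v (Suc i) a b \<longleftrightarrow>
     bar_less v i (v (Suc i) a) (v (Suc i) b) \<or> (v (Suc i) a = v (Suc i) b \<and> a < b)"

definition bar_iso ::
  "nat \<Rightarrow> (nat \<Rightarrow> nat) \<Rightarrow> (nat \<Rightarrow> nat \<Rightarrow> nat) \<Rightarrow> (nat \<Rightarrow> nat \<Rightarrow> nat) \<Rightarrow> (nat \<Rightarrow> nat \<Rightarrow> nat) \<Rightarrow> bool" where
  "bar_iso k n v u \<sigma> \<longleftrightarrow>
     (\<forall>i\<in>{1..k}. \<forall>a<n i. \<forall>b<n i. bar_less v i a b \<longrightarrow> bar_less u i (\<sigma> i a) (\<sigma> i b))"

end

theory Submission
  imports Defs
begin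

lemma bar_irrefl: "\<not> bar_less v i x x"
  by (induction i arbitrary: x) auto

theorem mainTheorem4:
  assumes "level_tree_crossings k n v"
    and "level_tree_crossings k m u"
    and "unordered_iso k n v m u \<sigma>"
  shows "bar_iso k n v u \<sigma> \<longleftrightarrow>
    (\<forall>i\<in>{1..k}. \<forall>a<n i. \<forall>b<n i. v i a = v i b \<and> a < b \<longrightarrow> \<sigma> i a < \<sigma> i b)"
proof
  assume B: "bar_iso k n v u \<sigma>"
  show "\<forall>i\<in>{1..k}. \<forall>a<n i. \<forall>b<n i. v i a = v i b \<and> a < b \<longrightarrow> \<sigma> i a < \<sigma> i b"
  proof (intro ballI allI impI)
    fix i a b assume i: "i \<in> {1..k}" and a: "a < n i" and b: "b < n i" and ab: "v i a = v i b \<and> a < b"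
    then obtain j where j: "i = Suc j" by (cases i) auto
    have "bar_less v i a b" using ab j by simp
    hence "bar_less u i (\<sigma> i a) (\<sigma> i b)" using B i a b unfolding bar_iso_def by blast
    moreover have "u i (\<sigma> i a) = u i (\<sigma> i b)"
      using assms(3) i a b ab unfolding unordered_iso_def by metis
    ultimately show "\<sigma> i a < \<sigma> i b" using j bar_irrefl by (simp; metis)
  qed
next
  assume F: "\<forall>i\<in>{1..k}. \<forall>a<n i. \<forall>b<n i. v i a = v i b \<and> a < b \<longrightarrow> \<sigma> i a < \<sigma> i b"
  have "i \<le> k \<Longrightarrow> \<forall>a<n i. \<forall>b<n i. bar_less v i a b \<longrightarrow> bar_less u i (\<sigma> i a) (\<sigma> i b)" for i
  proof (induction i)
    case 0
    then show ?case using assms(1) unfolding level_tree_crossings_def by auto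
  next
    case (Suc j)
    show ?case
    proof (intro allI impI)
      fix a b assume a: "a < n (Suc j)" and b: "b < n (Suc j)" and l: "bar_less v (Suc j) a b"
      have i: "Suc j \<in> {1..k}" using Suc by auto
      have va: "v (Suc j) a < n j" and vb: "v (Suc j) b < n j"
        using assms(1) i a b unfolding level_tree_crossings_def by fastforce+
      have ca: "u (Suc j) (\<sigma> (Suc j) a) = \<sigma> j (v (Suc j) a)"
        and cb: "u (Suc j) (\<sigma> (Suc j) b) = \<sigma> j (v (Suc j) b)"
        using assms(3) i a b unfolding unordered_iso_def by fastforce+
      from l consider "bar_less v j (v (Suc j) a) (v (Suc j) b)"
        | "v (Suc j) a = v (Suc j) b \<and> a < b" by auto
      then show "bar_less u (Suc j) (\<sigma> (Suc j) a) (\<sigma> (Suc j) b)"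
      proof cases
        case 1
        then show ?thesis using Suc va vb ca cb by simp
      next
        case 2
        then show ?thesis using F i a b ca cb by auto
      qed
    qed
  qed
  then show "bar_iso k n v u \<sigma>" unfolding bar_iso_def by auto
qed

end
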